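(* Let $n\ge1$, $x_1\ge\dots\ge x_n>0$, and let $\xi$, $\pi$, $Z^{x,q}$, $T_{l;j-k}$ and $\zeta^{l;j-k}$ be as in the context. Let $j\le k\le l$ be indices in $[n]$ such that $k=l$ implies $j=l$, and fix $q>0$. Then, almost surely on the event $\{T_{l;j-k}\le q\}$, the cumulative arrival rate of $\zeta^{l;j-k}$ up to time $q$, namely $(q-T_{l;j-k})\,r_{l;j-k}$, equals $q$ times the area of the region $R_{l;j-k}(q)$ matched to $\zeta^{l;j-k}$ at time $q$. In particular, for $l>k$: $(q-T_{l;j-k})\,x_{\pi_l}(x_{\pi_j}+\dots+x_{\pi_k})=q\cdot \mathrm{Area}(R_{l;j-k}(q))$.
   Context: Vertex $i\in[n]$ has mass $x_i$. Let $\xi_1,\dots,\xi_n$ be independent, $\xi_i$ exponential of rate $x_i$, order statistics $\xi_{(1)}<\dots<\xi_{(n)}$, permutation $\pi$ with $\xi_{\pi_i}=\xi_{(i)}$, $\xi^q_{(i)}=\xi_{(i)}/q$. Simultaneous breadth-first walk: $Z^{x,q}(s)=\sum_{i=1}^n x_i\mathbf 1(\xi_i/q\le s)-s$, $s\ge0$, $q>0$; $Z^{x,q}(u-)$ denotes the left limit. Forest $\mathcal F_0(q)$: intervals $I^q_i=(a_i,b_i]$ with $I^q_1=(\xi^q_{(1)},\xi^q_{(1)}+x_{\pi_1}]$; for $i\ge2$, if $\xi^q_{(i)}\le b_{i-1}$ ($\pi_i$ non-root) then $I^q_i=(a_{i-1},b_{i-1}+x_{\pi_i}]$, else ($\pi_i$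 root) $I^q_i=(\xi^q_{(i)},\xi^q_{(i)}+x_{\pi_i}]$. The components (trees) of $\mathcal F_0(q)$ are the blocks $\{\pi_i,\dots,\pi_m\}$ consisting of a root $\pi_i$ and the subsequent non-roots up to the next root; they correspond to the excursions of $Z^{x,q}$ above its running infimum. For $j\le k<l$, $T_{l;j-k}$ is the (possibly infinite) time at which the component of $\mathcal F_0$ containing $\pi_l$ merges with a component consisting of exactly $\{\pi_j,\dots,\pi_k\}$; for $j=k=l$, $T_{l;l-l}=0$. The process $\zeta^{l;j-k}$ is a Poisson process active after $T_{l;j-k}$ with rate $r_{l;j-k}=x_{\pi_l}(x_{\pi_j}+\dots+x_{\pi_k})$ if $l>k$, and $r_{l;l-l}=x_{\pi_l}^2/2$. Matched regions at time $z$: for $j=k=l$, $R_{l;l-l}(z)$ is the triangle with vertices $(\xi^z_{(l)},Z^{x,z}(\xi^z_{(l)}-))$, $(\xi^z_{(l)},Z^{x,z}(\xi^z_{(l)}))$, $(\xi^z_{(l)}+x_{\pi_l},Z^{x,z}(\xi^z_{(l)}-))$. For $l>k$ and $z>T_{l;j-k}$, $R_{l;j-k}(z)$ is the parallelogram in the $(x,y)$-plane bounded by the lines $y=-(x-\xi^z_{(l)})+Z^{x,z}(\xi^z_{(l)}-)$, $y=-(x-\xi^z_{(l)})+Z^{x,z}(\xi^z_{(l)})$, $y=Z^{x,z}(\xi^z_{(j)}-)$ and $y=Z^{x,z}(\xi^z_{(k+1)}-)$ (at $z=T_{l;j-k}$ it is degenerate with area $0$). *)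

theory Defs
  imports "HOL-Probability.Probability"
begin

text \<open>Deterministic objects built from a realisation xi of the exponential clocks.
Vertices are 1..n; x i is the mass of vertex i.\<close>

text \<open>pi_i: the vertex with the i-th smallest clock (well defined when the clocks are distinct).\<close>
definition sbw_perm :: "(nat \<Rightarrow> real) \<Rightarrow> nat \<Rightarrow> nat \<Rightarrow> nat" where
  "sbw_perm xi n i = (THE v. v \<in> {1..n} \<and> card {u \<in> {1..n}. xi u < xi v} + 1 = i)"

definition sbw_ostat :: "(nat \<Rightarrow> real) \<Rightarrow> nat \<Rightarrow> nat \<Rightarrow> real" where
  "sbw_ostat xi n i = xi (sbw_perm xi n i)"

definition sbw_Z :: "(nat \<Rightarrow> real) \<Rightarrow> (nat \<Rightarrow> real) \<Rightarrow> nat \<Rightarrow> real \<Rightarrow> real \<Rightarrow> real" where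
  "sbw_Z x xi n q s = (\<Sum>i\<in>{1..n}. if xi i / q \<le> s then x i else 0) - s"

definition sbw_Z_left :: "(nat \<Rightarrow> real) \<Rightarrow> (nat \<Rightarrow> real) \<Rightarrow> nat \<Rightarrow> real \<Rightarrow> real \<Rightarrow> real" where
  "sbw_Z_left x xi n q u = Lim (at_left u) (sbw_Z x xi n q)"

text \<open>Intervals I^q_i = (a_i, b_i] of the forest F_0(q), indexed i = 1..n (index 0 is a dummy).\<close>
fun sbw_iv :: "(nat \<Rightarrow> real) \<Rightarrow> (nat \<Rightarrow> real) \<Rightarrow> nat \<Rightarrow> real \<Rightarrow> nat \<Rightarrow> real \<times> real" where
  "sbw_iv x xi n q 0 = (0, 0)"
| "sbw_iv x xi n q (Suc i) =
     (let s = sbw_ostat xi n (Suc i) / q; m = x (sbw_perm xi n (Suc i)) in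
      if i = 0 then (s, s + m)
      else (case sbw_iv x xi n q i of (a, b) \<Rightarrow>
              if s \<le> b then (a, b + m) else (s, s + m)))"

definition sbw_root :: "(nat \<Rightarrow> real) \<Rightarrow> (nat \<Rightarrow> real) \<Rightarrow> nat \<Rightarrow> real \<Rightarrow> nat \<Rightarrow> bool" where
  "sbw_root x xi n q i \<longleftrightarrow> i = 1 \<or> \<not> (sbw_ostat xi n i / q \<le> snd (sbw_iv x xi n q (i - 1)))"

definition sbw_block_root :: "(nat \<Rightarrow> real) \<Rightarrow> (nat \<Rightarrow> real) \<Rightarrow> nat \<Rightarrow> real \<Rightarrow> nat \<Rightarrow> nat" where
  "sbw_block_root x xi n q i = Max {r \<in> {1..i}. sbw_root x xi n q r}"

definition sbw_comp :: "(nat \<Rightarrow> real) \<Rightarrow> (nat \<Rightarrow> real) \<Rightarrow> nat \<Rightarrow> real \<Rightarrow> nat \<Rightarrow> nat set" where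
  "sbw_comp x xi n q i = sbw_perm xi n ` {r \<in> {1..n}. sbw_block_root x xi n q r = sbw_block_root x xi n q i}"

definition sbw_merge_at :: "(nat \<Rightarrow> real) \<Rightarrow> (nat \<Rightarrow> real) \<Rightarrow> nat \<Rightarrow> nat \<Rightarrow> nat \<Rightarrow> nat \<Rightarrow> real \<Rightarrow> bool" where
  "sbw_merge_at x xi n j k l t \<longleftrightarrow> 0 < t \<and>
     eventually (\<lambda>s. sbw_comp x xi n s j = sbw_perm xi n ` {j..k} \<and>
                      sbw_perm xi n l \<notin> sbw_comp x xi n s j) (at_left t) \<and>
     sbw_comp x xi n t l = sbw_comp x xi n t j"

definition sbw_T :: "(nat \<Rightarrow> real) \<Rightarrow> (nat \<Rightarrow> real) \<Rightarrow> nat \<Rightarrow> nat \<Rightarrow> nat \<Rightarrow> nat \<Rightarrow> ereal" where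
  "sbw_T x xi n j k l = (if j = l \<and> k = l then 0
      else Inf {ereal t | t. sbw_merge_at x xi n j k l t})"

definition sbw_rate :: "(nat \<Rightarrow> real) \<Rightarrow> (nat \<Rightarrow> real) \<Rightarrow> nat \<Rightarrow> nat \<Rightarrow> nat \<Rightarrow> nat \<Rightarrow> real" where
  "sbw_rate x xi n j k l = (if k < l then x (sbw_perm xi n l) * (\<Sum>i=j..k. x (sbw_perm xi n i))
      else (x (sbw_perm xi n l))\<^sup>2 / 2)"

definition sbw_region :: "(nat \<Rightarrow> real) \<Rightarrow> (nat \<Rightarrow> real) \<Rightarrow> nat \<Rightarrow> nat \<Rightarrow> nat \<Rightarrow> nat \<Rightarrow> real \<Rightarrow> (real \<times> real) set" where
  "sbw_region x xi n j k l z =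
    (let s = sbw_ostat xi n l / z;
         Zm = sbw_Z_left x xi n z s; Z0 = sbw_Z x xi n z s in
     if k < l then
       (let h1 = sbw_Z_left x xi n z (sbw_ostat xi n j / z);
            h2 = sbw_Z_left x xi n z (sbw_ostat xi n (Suc k) / z) in
        {(a, b). min Zm Z0 \<le> b + (a - s) \<and> b + (a - s) \<le> max Zm Z0 \<and>
                 min h1 h2 \<le> b \<and> b \<le> max h1 h2})
     else convex hull {(s, Zm), (s, Z0), (s + x (sbw_perm xi n l), Zm)})"

end

theory Submission
  imports Defs
begin


definition rk :: "(nat \<Rightarrow> real) \<Rightarrow> nat \<Rightarrow> nat \<Rightarrow> nat" where
  "rk xi n v = card {u \<in> {1..n}. xi u < xi v} + 1"

lemma rk_range: assumes "v \<in> {1..n}" shows "rk xi n v \<in> {1..n}"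
proof -
  have "{u \<in> {1..n}. xi u < xi v} \<subseteq> {1..n} - {v}" by auto
  hence "card {u \<in> {1..n}. xi u < xi v} \<le> card ({1..n} - {v})" by (intro card_mono) auto
  also have "\<dots> = n - 1" using assms by simp
  finally show ?thesis using assms unfolding rk_def by auto
qed

lemma rk_mono: assumes "v \<in> {1..n}" "w \<in> {1..n}" "xi v < xi w" shows "rk xi n v < rk xi n w"
proof -
  have "{u \<in> {1..n}. xi u < xi v} \<subset> {u \<in> {1..n}. xi u < xi w}" using assms by auto
  hence "card {u \<in> {1..n}. xi u < xi v} < card {u \<in> {1..n}. xi u < xi w}"
    by (intro psubset_card_mono) auto
  thus ?thesis unfolding rk_def by simp
qed

lemma rk_inj: assumes "inj_on xi {1..n}" shows "inj_on (rk xi n) {1..n}"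
proof (rule inj_onI)
  fix v w assume vw: "v \<in> {1..n}" "w \<in> {1..n}" "rk xi n v = rk xi n w"
  show "v = w"
  proof (rule ccontr)
    assume "v \<noteq> w"
    hence "xi v \<noteq> xi w" using inj_on_contraD[OF assms _ vw(1) vw(2)] by blast
    hence "xi v < xi w \<or> xi w < xi v" by linarith
    thus False using rk_mono[of v n w xi] rk_mono[of w n v xi] vw by auto
  qed
qed

lemma rk_surj: assumes "inj_on xi {1..n}" shows "rk xi n ` {1..n} = {1..n}"
proof -
  have "rk xi n ` {1..n} \<subseteq> {1..n}" using rk_range by blast
  moreover have "card (rk xi n ` {1..n}) = card {1..n}" using card_image[OF rk_inj[OF assms]] .
  ultimately show ?thesis by (intro card_subset_eq) auto
qed

lemma perm_props: assumes "inj_on xi {1..n}" "i \<in> {1..n}"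
  shows "sbw_perm xi n i \<in> {1..n} \<and> rk xi n (sbw_perm xi n i) = i"
proof -
  obtain v where v: "v \<in> {1..n}" "rk xi n v = i" using rk_surj[OF assms(1)] assms(2) by (metis imageE)
  have ex: "\<exists>!v. v \<in> {1..n} \<and> card {u \<in> {1..n}. xi u < xi v} + 1 = i"
  proof (rule ex1I[of _ v])
    show "v \<in> {1..n} \<and> card {u \<in> {1..n}. xi u < xi v} + 1 = i" using v unfolding rk_def by auto
  next
    fix w assume "w \<in> {1..n} \<and> card {u \<in> {1..n}. xi u < xi w} + 1 = i"
    hence "w \<in> {1..n}" "rk xi n w = rk xi n v" using v unfolding rk_def by auto
    thus "w = v" using inj_onD[OF rk_inj[OF assms(1)] _ _ v(1)] by blast
  qed
  show ?thesis using theI'[OF ex] unfolding sbw_perm_def rk_def by simp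
qed

lemma perm_in: "inj_on xi {1..n} \<Longrightarrow> i \<in> {1..n} \<Longrightarrow> sbw_perm xi n i \<in> {1..n}"
  using perm_props by blast

lemma perm_inj: assumes "inj_on xi {1..n}" shows "inj_on (sbw_perm xi n) {1..n}"
proof (rule inj_onI)
  fix i i' assume ii: "i \<in> {1..n}" "i' \<in> {1..n}" "sbw_perm xi n i = sbw_perm xi n i'"
  have "i = rk xi n (sbw_perm xi n i)" using perm_props[OF assms ii(1)] by simp
  also have "\<dots> = rk xi n (sbw_perm xi n i')" using ii(3) by simp
  also have "\<dots> = i'" using perm_props[OF assms ii(2)] by simp
  finally show "i = i'" .
qed

lemma perm_bij: assumes "inj_on xi {1..n}" shows "bij_betw (sbw_perm xi n) {1..n} {1..n}"
proof -
  have "sbw_perm xi n ` {1..n} \<subseteq> {1..n}" using perm_in[OF assms] by blast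
  moreover have "card (sbw_perm xi n ` {1..n}) = card {1..n}" using card_image[OF perm_inj[OF assms]] .
  ultimately have "sbw_perm xi n ` {1..n} = {1..n}" by (intro card_subset_eq) auto
  thus ?thesis using perm_inj[OF assms] unfolding bij_betw_def by simp
qed

lemma ostat_less_iff: assumes "inj_on xi {1..n}" "u \<in> {1..n}" "a \<in> {1..n}"
  shows "sbw_ostat xi n u < sbw_ostat xi n a \<longleftrightarrow> u < a"
proof -
  let ?p = "sbw_perm xi n"
  have pu: "?p u \<in> {1..n}" "rk xi n (?p u) = u" using perm_props[OF assms(1,2)] by auto
  have pa: "?p a \<in> {1..n}" "rk xi n (?p a) = a" using perm_props[OF assms(1,3)] by auto
  show ?thesis
  proof
    assume "sbw_ostat xi n u < sbw_ostat xi n a"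
    hence "xi (?p u) < xi (?p a)" unfolding sbw_ostat_def .
    from rk_mono[OF pu(1) pa(1) this] show "u < a" using pu(2) pa(2) by simp
  next
    assume ua: "u < a"
    have "?p u \<noteq> ?p a" using pu(2) pa(2) ua by auto
    hence "xi (?p u) \<noteq> xi (?p a)" using inj_on_contraD[OF assms(1) _ pu(1) pa(1)] by blast
    moreover have "\<not> xi (?p a) < xi (?p u)"
    proof
      assume "xi (?p a) < xi (?p u)"
      from rk_mono[OF pa(1) pu(1) this] show False using pu(2) pa(2) ua by simp
    qed
    ultimately show "sbw_ostat xi n u < sbw_ostat xi n a" unfolding sbw_ostat_def by linarith
  qed
qed

lemma ostat_eq_iff: assumes "inj_on xi {1..n}" "u \<in> {1..n}" "a \<in> {1..n}"
  shows "sbw_ostat xi n u = sbw_ostat xi n a \<longleftrightarrow> u = a"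
proof -
  have 1: "sbw_ostat xi n u < sbw_ostat xi n a \<longleftrightarrow> u < a" using ostat_less_iff[OF assms] .
  have 2: "sbw_ostat xi n a < sbw_ostat xi n u \<longleftrightarrow> a < u" using ostat_less_iff[OF assms(1,3,2)] .
  show ?thesis
  proof (cases "u < a")
    case True thus ?thesis using 1 by auto
  next
    case False
    thus ?thesis using 2 by (cases "a < u") auto
  qed
qed

lemma sum_reindex_perm: assumes "inj_on xi {1..n}"
  shows "(\<Sum>i\<in>{1..n}. g i) = (\<Sum>u\<in>{1..n}. g (sbw_perm xi n u))"
  using sum.reindex_bij_betw[OF perm_bij[OF assms], of g] by simp

lemma sum_less: assumes "inj_on xi {1..n}" "a \<in> {1..n}" "0 < q"
  shows "(\<Sum>i\<in>{1..n}. if xi i / q < sbw_ostat xi n a / q then x i else 0)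
       = (\<Sum>u\<in>{1..<a}. x (sbw_perm xi n u))"
proof -
  have "(\<Sum>i\<in>{1..n}. if xi i / q < sbw_ostat xi n a / q then x i else 0)
     = (\<Sum>u\<in>{1..n}. if sbw_ostat xi n u < sbw_ostat xi n a then x (sbw_perm xi n u) else 0)"
  proof -
    have c: "\<And>i. (xi i / q < sbw_ostat xi n a / q) = (xi i < sbw_ostat xi n a)"
      using assms(3) by (simp add: divide_less_cancel)
    have "(\<Sum>i\<in>{1..n}. if xi i / q < sbw_ostat xi n a / q then x i else 0)
        = (\<Sum>i\<in>{1..n}. if xi i < sbw_ostat xi n a then x i else 0)" by (simp only: c)
    also have "\<dots> = (\<Sum>u\<in>{1..n}. if xi (sbw_perm xi n u) < sbw_ostat xi n a then x (sbw_perm xi n u) else 0)"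
      by (rule sum_reindex_perm[OF assms(1)])
    finally show ?thesis by (simp only: sbw_ostat_def)
  qed
  also have "\<dots> = (\<Sum>u\<in>{1..n}. if u < a then x (sbw_perm xi n u) else 0)"
    using ostat_less_iff[OF assms(1) _ assms(2)] by (intro sum.cong) auto
  also have "\<dots> = (\<Sum>u\<in>{u\<in>{1..n}. u < a}. x (sbw_perm xi n u))"
    by (rule sum.inter_filter[symmetric]) simp
  also have "{u\<in>{1..n}. u < a} = {1..<a}" using assms(2) by auto
  finally show ?thesis .
qed

lemma sum_le: assumes "inj_on xi {1..n}" "a \<in> {1..n}" "0 < q"
  shows "(\<Sum>i\<in>{1..n}. if xi i / q \<le> sbw_ostat xi n a / q then x i else 0)
       = (\<Sum>u\<in>{1..a}. x (sbw_perm xi n u))"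
proof -
  have "(\<Sum>i\<in>{1..n}. if xi i / q \<le> sbw_ostat xi n a / q then x i else 0)
     = (\<Sum>u\<in>{1..n}. if sbw_ostat xi n u \<le> sbw_ostat xi n a then x (sbw_perm xi n u) else 0)"
  proof -
    have c: "\<And>i. (xi i / q \<le> sbw_ostat xi n a / q) = (xi i \<le> sbw_ostat xi n a)"
      using assms(3) by (simp add: divide_le_cancel)
    have "(\<Sum>i\<in>{1..n}. if xi i / q \<le> sbw_ostat xi n a / q then x i else 0)
        = (\<Sum>i\<in>{1..n}. if xi i \<le> sbw_ostat xi n a then x i else 0)" by (simp only: c)
    also have "\<dots> = (\<Sum>u\<in>{1..n}. if xi (sbw_perm xi n u) \<le> sbw_ostat xi n a then x (sbw_perm xi n u) else 0)"
      by (rule sum_reindex_perm[OF assms(1)])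
    finally show ?thesis by (simp only: sbw_ostat_def)
  qed
  also have "\<dots> = (\<Sum>u\<in>{1..n}. if u \<le> a then x (sbw_perm xi n u) else 0)"
  proof (intro sum.cong refl)
    fix u assume u: "u \<in> {1..n}"
    have "(sbw_ostat xi n u \<le> sbw_ostat xi n a) = (sbw_ostat xi n u < sbw_ostat xi n a \<or> sbw_ostat xi n u = sbw_ostat xi n a)"
      by linarith
    also have "\<dots> = (u < a \<or> u = a)" using ostat_less_iff[OF assms(1) u assms(2)] ostat_eq_iff[OF assms(1) u assms(2)] by simp
    also have "\<dots> = (u \<le> a)" by linarith
    finally show "(if sbw_ostat xi n u \<le> sbw_ostat xi n a then x (sbw_perm xi n u) else 0) = (if u \<le> a then x (sbw_perm xi n u) else 0)"
      by simp
  qed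
  also have "\<dots> = (\<Sum>u\<in>{u\<in>{1..n}. u \<le> a}. x (sbw_perm xi n u))"
    by (rule sum.inter_filter[symmetric]) simp
  also have "{u\<in>{1..n}. u \<le> a} = {1..a}" using assms(2) by auto
  finally show ?thesis .
qed

lemma Z_left_eq: "sbw_Z_left x xi n q u = (\<Sum>i\<in>{1..n}. if xi i / q < u then x i else 0) - u"
proof -
  let ?C = "(\<Sum>i\<in>{1..n}. if xi i / q < u then x i else 0)"
  have ev: "eventually (\<lambda>s. xi i / q \<le> s \<longleftrightarrow> xi i / q < u) (at_left u)" for i
  proof (cases "xi i / q < u")
    case True
    show ?thesis using eventually_at_left_real[OF True] by (rule eventually_mono) (use True in auto)
  next
    case False
    have "u - 1 < u" by simp
    show ?thesis using eventually_at_left_real[OF \<open>u - 1 < u\<close>] by (rule eventually_mono) (use False in auto)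
  qed
  have "eventually (\<lambda>s. \<forall>i\<in>{1..n}. (xi i / q \<le> s \<longleftrightarrow> xi i / q < u)) (at_left u)"
    using ev by (simp add: eventually_ball_finite)
  hence "eventually (\<lambda>s. ?C - s = sbw_Z x xi n q s) (at_left u)"
    by (rule eventually_mono) (auto simp: sbw_Z_def intro!: sum.cong)
  moreover have "((\<lambda>s. ?C - s) \<longlongrightarrow> ?C - u) (at_left u)"
    by (intro tendsto_intros tendsto_ident_at)
  ultimately have "(sbw_Z x xi n q \<longlongrightarrow> ?C - u) (at_left u)"
    by (rule Lim_transform_eventually[rotated])
  thus ?thesis unfolding sbw_Z_left_def by (intro tendsto_Lim) auto
qed



lemma iv_snd_1: "snd (sbw_iv x xi n q (Suc 0)) = sbw_ostat xi n 1 / q + x (sbw_perm xi n 1)"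
  by (simp add: Let_def)

lemma iv_snd_Suc: assumes "1 \<le> i"
  shows "snd (sbw_iv x xi n q (Suc i)) = max (snd (sbw_iv x xi n q i)) (sbw_ostat xi n (Suc i) / q) + x (sbw_perm xi n (Suc i))"
  using assms by (auto simp: Let_def max_def split: prod.split)

lemma iv_cont: assumes "t \<noteq> 0" "1 \<le> i" shows "isCont (\<lambda>q. snd (sbw_iv x xi n q i)) t"
  using assms(2)
proof (induction i rule: dec_induct)
  case base
  show ?case using assms(1) by (simp only: One_nat_def iv_snd_1) (intro continuous_intros, auto)
next
  case (step i)
  have e: "(\<lambda>q. snd (sbw_iv x xi n q (Suc i))) = (\<lambda>q. max (snd (sbw_iv x xi n q i)) (sbw_ostat xi n (Suc i) / q) + x (sbw_perm xi n (Suc i)))"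
    using iv_snd_Suc[OF step(1)] by (intro ext) simp
  have c2: "isCont (\<lambda>q. sbw_ostat xi n (Suc i) / q) t" using assms(1) by (intro continuous_intros) auto
  have "isCont (\<lambda>q. max (snd (sbw_iv x xi n q i)) (sbw_ostat xi n (Suc i) / q)) t"
    using continuous_max[OF step(3) c2] .
  from continuous_add[OF this continuous_const] show ?case unfolding e .
qed

lemma root_1: "sbw_root x xi n q 1" by (simp add: sbw_root_def)

lemma root_iff: "2 \<le> i \<Longrightarrow> sbw_root x xi n q i \<longleftrightarrow> \<not> (sbw_ostat xi n i / q \<le> snd (sbw_iv x xi n q (i - 1)))"
  by (simp add: sbw_root_def)

lemma b_root: assumes "2 \<le> i" "sbw_root x xi n q i"
  shows "snd (sbw_iv x xi n q i) = sbw_ostat xi n i / q + x (sbw_perm xi n i)"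
proof -
  obtain i' where i': "i = Suc i'" "1 \<le> i'" using assms(1) by (cases i) auto
  show ?thesis using assms i' iv_snd_Suc[OF i'(2), of x xi n q] root_iff[OF assms(1), of x xi n q] by simp
qed

lemma b_nonroot: assumes "2 \<le> i" "\<not> sbw_root x xi n q i"
  shows "snd (sbw_iv x xi n q i) = snd (sbw_iv x xi n q (i - 1)) + x (sbw_perm xi n i)"
proof -
  obtain i' where i': "i = Suc i'" "1 \<le> i'" using assms(1) by (cases i) auto
  show ?thesis using assms i' iv_snd_Suc[OF i'(2), of x xi n q] root_iff[OF assms(1), of x xi n q] by simp
qed

lemma br_props: assumes "1 \<le> i"
  shows "sbw_block_root x xi n q i \<in> {1..i} \<and> sbw_root x xi n q (sbw_block_root x xi n q i)"
proof -
  have "1 \<in> {r \<in> {1..i}. sbw_root x xi n q r}" using assms root_1 by auto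
  hence "Max {r \<in> {1..i}. sbw_root x xi n q r} \<in> {r \<in> {1..i}. sbw_root x xi n q r}"
    by (intro Max_in) auto
  thus ?thesis unfolding sbw_block_root_def by simp
qed

lemma br_root: assumes "1 \<le> i" "sbw_root x xi n q i" shows "sbw_block_root x xi n q i = i"
  unfolding sbw_block_root_def using assms by (intro Max_eqI) auto

lemma br_nonroot: assumes "2 \<le> i" "\<not> sbw_root x xi n q i"
  shows "sbw_block_root x xi n q i = sbw_block_root x xi n q (i - 1)"
proof -
  have "{r \<in> {1..i}. sbw_root x xi n q r} = {r \<in> {1..i - 1}. sbw_root x xi n q r}"
  proof (intro set_eqI iffI)
    fix r assume r: "r \<in> {r \<in> {1..i}. sbw_root x xi n q r}"
    hence "r \<noteq> i" using assms(2) by auto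
    with r show "r \<in> {r \<in> {1..i - 1}. sbw_root x xi n q r}" by auto
  next
    fix r assume "r \<in> {r \<in> {1..i - 1}. sbw_root x xi n q r}"
    thus "r \<in> {r \<in> {1..i}. sbw_root x xi n q r}" by auto
  qed
  thus ?thesis unfolding sbw_block_root_def by simp
qed

lemma br_mono: assumes "1 \<le> i" "i \<le> i'" shows "sbw_block_root x xi n q i \<le> sbw_block_root x xi n q i'"
proof -
  have "1 \<in> {r \<in> {1..i}. sbw_root x xi n q r}" using assms root_1 by auto
  thus ?thesis unfolding sbw_block_root_def using assms by (intro Max_mono) auto
qed

lemma br_eq_root: assumes "1 \<le> i" "sbw_block_root x xi n q i = i" shows "sbw_root x xi n q i"
  using br_props[OF assms(1), of x xi n q] assms(2) by simp



lemma block_facts: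
  assumes inj: "inj_on xi {1..n}" and jk: "1 \<le> j" "j \<le> k" "k < n"
    and c: "sbw_comp x xi n s j = sbw_perm xi n ` {j..k}"
  shows "sbw_root x xi n s j" "\<And>i. j < i \<Longrightarrow> i \<le> k \<Longrightarrow> \<not> sbw_root x xi n s i"
    "sbw_root x xi n s (Suc k)"
proof -
  let ?br = "sbw_block_root x xi n s"
  define R where "R = {r \<in> {1..n}. ?br r = ?br j}"
  have "sbw_perm xi n ` R = sbw_perm xi n ` {j..k}" using c unfolding sbw_comp_def R_def .
  moreover have "R \<subseteq> {1..n}" "{j..k} \<subseteq> {1..n}" using jk unfolding R_def by auto
  ultimately have R: "R = {j..k}" using inj_on_image_eq_iff[OF perm_inj[OF inj]] by blast
  show rj: "sbw_root x xi n s j"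
  proof (cases "j = 1")
    case True thus ?thesis using root_1 by simp
  next
    case False
    hence "j - 1 \<in> {1..n}" "j - 1 \<notin> R" using jk R by auto
    hence "?br (j - 1) \<noteq> ?br j" unfolding R_def by auto
    thus ?thesis using br_nonroot[of j x xi n s] False jk by (cases "j = 0") auto
  qed
  have brj: "?br j = j" using br_root[OF jk(1) rj] .
  show "\<not> sbw_root x xi n s i" if "j < i" "i \<le> k" for i
  proof
    assume ri: "sbw_root x xi n s i"
    have "i \<in> R" using R that by auto
    hence "?br i = j" using brj unfolding R_def by auto
    moreover have "?br i = i" using br_root[OF _ ri] that jk by auto
    ultimately show False using that by simp
  qed
  show "sbw_root x xi n s (Suc k)"
  proof (rule ccontr)
    assume nr: "\<not> sbw_root x xi n s (Suc k)"
    have "Suc k \<in> {1..n}" "Suc k \<notin> R" using jk R by auto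
    hence "?br (Suc k) \<noteq> ?br j" unfolding R_def by auto
    moreover have "k \<in> R" using R jk by auto
    hence "?br k = ?br j" unfolding R_def by auto
    moreover have "?br (Suc k) = ?br k" using br_nonroot[of "Suc k" x xi n s] nr jk by auto
    ultimately show False by simp
  qed
qed

lemma b_block:
  assumes "1 \<le> j" "j \<le> k" "sbw_root x xi n s j" "\<And>i. j < i \<Longrightarrow> i \<le> k \<Longrightarrow> \<not> sbw_root x xi n s i"
  shows "snd (sbw_iv x xi n s k) = sbw_ostat xi n j / s + (\<Sum>u=j..k. x (sbw_perm xi n u))"
  using assms(2,4)
proof (induction k rule: dec_induct)
  case base
  show ?case
  proof (cases "j = 1")
    case True thus ?thesis using iv_snd_1[of x xi n s] by simp
  next
    case False thus ?thesis using b_root[of j x xi n s] assms(1,3) by simp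
  qed
next
  case (step i)
  have "\<not> sbw_root x xi n s (Suc i)" using step by auto
  hence "snd (sbw_iv x xi n s (Suc i)) = snd (sbw_iv x xi n s i) + x (sbw_perm xi n (Suc i))"
    using b_nonroot[of "Suc i" x xi n s] step(1) assms(1) by simp
  thus ?case using step by simp
qed

lemma merge_time:
  assumes inj: "inj_on xi {1..n}" and jkl: "1 \<le> j" "j \<le> k" "k < l" "l \<le> n"
    and m: "sbw_merge_at x xi n j k l t"
  shows "t * (\<Sum>u=j..k. x (sbw_perm xi n u)) = sbw_ostat xi n (Suc k) - sbw_ostat xi n j"
proof -
  define S where "S = (\<Sum>u=j..k. x (sbw_perm xi n u))"
  define f where "f = (\<lambda>s. snd (sbw_iv x xi n s k))"
  let ?oj = "sbw_ostat xi n j" and ?ok = "sbw_ostat xi n (Suc k)"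
  have t0: "0 < t" and ev: "eventually (\<lambda>s. sbw_comp x xi n s j = sbw_perm xi n ` {j..k} \<and>
                      sbw_perm xi n l \<notin> sbw_comp x xi n s j) (at_left t)"
    and eqt: "sbw_comp x xi n t l = sbw_comp x xi n t j"
    using m unfolding sbw_merge_at_def by auto
  have ev2: "eventually (\<lambda>s. f s = ?oj / s + S \<and> ?ok / s > f s) (at_left t)"
    using ev
  proof (rule eventually_mono)
    fix s assume "sbw_comp x xi n s j = sbw_perm xi n ` {j..k} \<and> sbw_perm xi n l \<notin> sbw_comp x xi n s j"
    hence c: "sbw_comp x xi n s j = sbw_perm xi n ` {j..k}" by simp
    have kn: "k < n" using jkl by simp
    note bf = block_facts[OF inj jkl(1,2) kn c]
    have fs: "f s = ?oj / s + S" unfolding f_def S_def by (rule b_block[OF jkl(1,2) bf(1,2)])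
    have "\<not> (?ok / s \<le> f s)" using bf(3) root_iff[of "Suc k" x xi n s] jkl unfolding f_def by simp
    thus "f s = ?oj / s + S \<and> ?ok / s > f s" using fs by simp
  qed
  have nr: "\<not> sbw_root x xi n t (Suc k)"
  proof
    assume r: "sbw_root x xi n t (Suc k)"
    let ?br = "sbw_block_root x xi n t"
    have lin: "l \<in> {1..n}" using jkl by auto
    have "sbw_perm xi n l \<in> sbw_comp x xi n t l" unfolding sbw_comp_def using lin by auto
    hence "sbw_perm xi n l \<in> sbw_comp x xi n t j" using eqt by simp
    then obtain r' where r': "r' \<in> {1..n}" "?br r' = ?br j" "sbw_perm xi n l = sbw_perm xi n r'"
      unfolding sbw_comp_def by auto
    have "l = r'" using inj_onD[OF perm_inj[OF inj] r'(3) lin r'(1)] .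
    hence "?br l = ?br j" using r' by simp
    moreover have "?br (Suc k) = Suc k" using br_root[OF _ r] by simp
    moreover have "?br (Suc k) \<le> ?br l" using br_mono[of "Suc k" l] jkl by simp
    moreover have "?br j \<le> j" using br_props[OF jkl(1), of x xi n t] by simp
    ultimately show False using jkl by simp
  qed
  hence le1: "?ok / t \<le> f t" using root_iff[of "Suc k" x xi n t] jkl unfolding f_def by simp
  have cont: "isCont f t" unfolding f_def using iv_cont[of t k x xi n] t0 jkl by simp
  hence ft: "(f \<longlongrightarrow> f t) (at_left t)" by (simp add: isCont_def filterlim_at_split)
  have "((\<lambda>s. ?oj / s + S) \<longlongrightarrow> ?oj / t + S) (at_left t)"
    using t0 by (intro tendsto_intros) auto
  hence "(f \<longlongrightarrow> ?oj / t + S) (at_left t)"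
    by (rule Lim_transform_eventually) (use ev2 in \<open>auto elim: eventually_mono\<close>)
  hence fteq: "f t = ?oj / t + S" using ft tendsto_unique[of "at_left t"] by (metis trivial_limit_at_left_real)
  have "((\<lambda>s. ?ok / s - f s) \<longlongrightarrow> ?ok / t - f t) (at_left t)"
    using t0 ft by (intro tendsto_intros) auto
  moreover have "eventually (\<lambda>s. 0 \<le> ?ok / s - f s) (at_left t)"
    using ev2 by (rule eventually_mono) auto
  ultimately have "0 \<le> ?ok / t - f t" by (rule tendsto_lowerbound) simp
  hence "?ok / t = ?oj / t + S" using le1 fteq by simp
  hence "?ok = ?oj + t * S" using t0 by (simp add: field_simps)
  thus ?thesis unfolding S_def by simp
qed



lemma para_area:
  fixes A B C D s :: real
  shows "measure lborel {(a, b). min A B \<le> b + (a - s) \<and> b + (a - s) \<le> max A B \<and>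
                 min C D \<le> b \<and> b \<le> max C D} = \<bar>A - B\<bar> * \<bar>C - D\<bar>"
proof -
  define c1 where "c1 = min A B" define c2 where "c2 = max A B"
  define d1 where "d1 = min C D" define d2 where "d2 = max C D"
  define P where "P = {(a::real, b::real). c1 \<le> b + (a - s) \<and> b + (a - s) \<le> c2 \<and> d1 \<le> b \<and> b \<le> d2}"
  have Peq: "P = {p. c1 \<le> snd p + (fst p - s)} \<inter> {p. snd p + (fst p - s) \<le> c2} \<inter> {p. d1 \<le> snd p} \<inter> {p. snd p \<le> d2}"
    unfolding P_def by auto
  have "closed P" unfolding Peq
    by (intro closed_Int closed_Collect_le continuous_intros)
  hence "P \<in> sets borel" by (rule borel_closed)
  hence Pb: "P \<in> sets (lborel \<Otimes>\<^sub>M lborel)" unfolding lborel_prod by simp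
  have sec: "(\<lambda>a. (a, b)) -` P = (if d1 \<le> b \<and> b \<le> d2 then {c1 - b + s .. c2 - b + s} else {})" for b
    unfolding P_def by auto
  have c12: "c1 \<le> c2" "d1 \<le> d2" unfolding c1_def c2_def d1_def d2_def by auto
  have "emeasure (lborel \<Otimes>\<^sub>M lborel) P = (\<integral>\<^sup>+b. emeasure lborel ((\<lambda>a. (a, b)) -` P) \<partial>lborel)"
    by (rule lborel_pair.emeasure_pair_measure_alt2[OF Pb])
  also have "\<dots> = (\<integral>\<^sup>+b. ennreal (c2 - c1) * indicator {d1..d2} b \<partial>lborel)"
    by (intro nn_integral_cong) (auto simp: sec c12 indicator_def)
  also have "\<dots> = ennreal (c2 - c1) * ennreal (d2 - d1)"
    using c12 by (subst nn_integral_cmult_indicator) auto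
  also have "\<dots> = ennreal ((c2 - c1) * (d2 - d1))" using c12 by (simp add: ennreal_mult)
  finally have "emeasure lborel P = ennreal ((c2 - c1) * (d2 - d1))" by (simp add: lborel_prod)
  hence "measure lborel P = (c2 - c1) * (d2 - d1)" using c12 by (simp add: measure_def)
  moreover have "(c2 - c1) * (d2 - d1) = \<bar>A - B\<bar> * \<bar>C - D\<bar>" unfolding c1_def c2_def d1_def d2_def
    by (simp add: min_def max_def abs_if)
  ultimately show ?thesis unfolding P_def c1_def c2_def d1_def d2_def by simp
qed

lemma tri_area:
  fixes s A m :: real assumes m: "0 < m"
  shows "measure lborel (convex hull {(s, A), (s, A + m), (s + m, A)}) = m\<^sup>2 / 2"
proof -
  define K where "K = convex hull (insert 0 Basis :: (real \<times> real) set)"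
  have B: "insert 0 (Basis :: (real \<times> real) set) = {(0,0), (0,1), (1,0)}"
    by (auto simp: Basis_prod_def zero_prod_def)
  have img: "{(s, A), (s, A + m), (s + m, A)} = (\<lambda>x. (s, A) + m *\<^sub>R x) ` insert 0 (Basis :: (real \<times> real) set)"
    unfolding B by auto
  have T: "convex hull {(s, A), (s, A + m), (s + m, A)} = (\<lambda>x. m *\<^sub>R x + (s, A)) ` K"
    unfolding img K_def convex_hull_affinity by (simp add: add.commute)
  have cK: "compact K" unfolding K_def by (intro finite_imp_compact_convex_hull) auto
  have cT: "compact (convex hull {(s, A), (s, A + m), (s + m, A)})"
    by (intro finite_imp_compact_convex_hull) auto
  have "measure lborel (convex hull {(s, A), (s, A + m), (s + m, A)}) =
        measure lebesgue (convex hull {(s, A), (s, A + m), (s + m, A)})"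
    using cT by (intro measure_completion[symmetric]) (auto dest: compact_imp_closed)
  also have "\<dots> = \<bar>m\<bar> ^ DIM(real \<times> real) * measure lebesgue K"
    unfolding T by (rule measure_lebesgue_affine)
  also have "measure lebesgue K = measure lborel K"
    using cK by (intro measure_completion) (auto dest: compact_imp_closed)
  also have "measure lborel K = 1 / fact DIM(real \<times> real)"
    unfolding K_def by (rule content_std_simplex)
  finally show ?thesis using m by (simp add: power2_eq_square)
qed



lemma det_main:
  assumes inj: "inj_on xi {1..n}" and xpos: "\<forall>i\<in>{1..n}. 0 < x i"
    and jkl: "1 \<le> j" "j \<le> k" "k \<le> l" "l \<le> n" "k = l \<longrightarrow> j = l" and q: "0 < q"
  shows "sbw_T x xi n j k l \<le> ereal q \<longrightarrow>
           (q - real_of_ereal (sbw_T x xi n j k l)) * sbw_rate x xi n j k l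
             = q * measure lborel (sbw_region x xi n j k l q)"
proof
  assume Tq: "sbw_T x xi n j k l \<le> ereal q"
  let ?m = "\<lambda>u. x (sbw_perm xi n u)"
  define s where "s = sbw_ostat xi n l / q"
  define Zm where "Zm = sbw_Z_left x xi n q s"
  define Z0 where "Z0 = sbw_Z x xi n q s"
  have lin: "l \<in> {1..n}" using jkl by auto
  have ml: "0 < ?m l" using xpos perm_in[OF inj lin] by auto
  have Zm_eq: "Zm = (\<Sum>u\<in>{1..<l}. ?m u) - s"
    unfolding Zm_def Z_left_eq s_def using sum_less[OF inj lin q, of x] by simp
  have Z0_eq: "Z0 = (\<Sum>u\<in>{1..l}. ?m u) - s"
    unfolding Z0_def sbw_Z_def s_def using sum_le[OF inj lin q, of x] by simp
  have "(\<Sum>u\<in>{1..l}. ?m u) = (\<Sum>u\<in>{1..<l}. ?m u) + ?m l"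
    using jkl by (simp add: atLeastLessThanSuc_atLeastAtMost[symmetric] del: atLeastLessThanSuc_atLeastAtMost)
  hence Z0Zm: "Z0 = Zm + ?m l" using Zm_eq Z0_eq by simp
  show "(q - real_of_ereal (sbw_T x xi n j k l)) * sbw_rate x xi n j k l
             = q * measure lborel (sbw_region x xi n j k l q)"
  proof (cases "k = l")
    case True
    hence jl: "j = l" using jkl by simp
    have T0: "sbw_T x xi n j k l = 0" unfolding sbw_T_def using True jl by simp
    have rate: "sbw_rate x xi n j k l = (?m l)\<^sup>2 / 2" unfolding sbw_rate_def using True by simp
    have reg: "sbw_region x xi n j k l q = convex hull {(s, Zm), (s, Zm + ?m l), (s + ?m l, Zm)}"
      unfolding sbw_region_def Let_def using True Z0Zm unfolding s_def Zm_def Z0_def by simp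
    show ?thesis unfolding T0 rate reg tri_area[OF ml] by simp
  next
    case False
    hence kl: "k < l" using jkl by simp
    define S where "S = (\<Sum>u=j..k. ?m u)"
    have Spos: "0 < S" unfolding S_def using jkl kl
      by (intro sum_pos) (auto intro!: xpos[rule_format] perm_in[OF inj])
    define t0 where "t0 = (sbw_ostat xi n (Suc k) - sbw_ostat xi n j) / S"
    have sub: "{ereal t | t. sbw_merge_at x xi n j k l t} \<subseteq> {ereal t0}"
    proof
      fix e assume "e \<in> {ereal t | t. sbw_merge_at x xi n j k l t}"
      then obtain t where e: "e = ereal t" "sbw_merge_at x xi n j k l t" by auto
      have "t * S = sbw_ostat xi n (Suc k) - sbw_ostat xi n j"
        unfolding S_def by (rule merge_time[OF inj jkl(1,2) kl jkl(4) e(2)])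
      hence "t = t0" unfolding t0_def using Spos by (simp add: field_simps)
      thus "e \<in> {ereal t0}" using e by simp
    qed
    have Tdef: "sbw_T x xi n j k l = Inf {ereal t | t. sbw_merge_at x xi n j k l t}"
      unfolding sbw_T_def using kl by simp
    have ne: "{ereal t | t. sbw_merge_at x xi n j k l t} \<noteq> {}"
    proof
      assume "{ereal t | t. sbw_merge_at x xi n j k l t} = {}"
      hence "sbw_T x xi n j k l = \<infinity>" unfolding Tdef by (simp add: top_ereal_def)
      thus False using Tq by simp
    qed
    hence "{ereal t | t. sbw_merge_at x xi n j k l t} = {ereal t0}" using sub by blast
    hence T: "sbw_T x xi n j k l = ereal t0" unfolding Tdef by simp
    hence t0q: "t0 \<le> q" using Tq by simp
    have rate: "sbw_rate x xi n j k l = ?m l * S" unfolding sbw_rate_def S_def using kl by simp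
    define h1 where "h1 = sbw_Z_left x xi n q (sbw_ostat xi n j / q)"
    define h2 where "h2 = sbw_Z_left x xi n q (sbw_ostat xi n (Suc k) / q)"
    have jin: "j \<in> {1..n}" and kin: "Suc k \<in> {1..n}" using jkl kl by auto
    have h1_eq: "h1 = (\<Sum>u\<in>{1..<j}. ?m u) - sbw_ostat xi n j / q"
      unfolding h1_def Z_left_eq using sum_less[OF inj jin q, of x] by simp
    have h2_eq: "h2 = (\<Sum>u\<in>{1..<Suc k}. ?m u) - sbw_ostat xi n (Suc k) / q"
      unfolding h2_def Z_left_eq using sum_less[OF inj kin q, of x] by simp
    have "(\<Sum>u\<in>{1..<Suc k}. ?m u) = (\<Sum>u\<in>{1..<j}. ?m u) + S"
      unfolding S_def atLeastLessThanSuc_atLeastAtMost[symmetric]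
      using jkl by (intro sum.atLeastLessThan_concat[symmetric]) auto
    hence "h2 - h1 = S - (sbw_ostat xi n (Suc k) - sbw_ostat xi n j) / q"
      using h1_eq h2_eq by (simp add: diff_divide_distrib)
    also have "(sbw_ostat xi n (Suc k) - sbw_ostat xi n j) = t0 * S"
      unfolding t0_def using Spos by simp
    finally have h21: "h2 - h1 = S - t0 * S / q" .
    have "t0 * S / q \<le> S" using t0q q Spos by (simp add: field_simps mult_right_mono)
    hence habs: "\<bar>h1 - h2\<bar> = S - t0 * S / q" using h21 by simp
    have reg: "sbw_region x xi n j k l q = {(a, b). min Zm Z0 \<le> b + (a - s) \<and> b + (a - s) \<le> max Zm Z0 \<and>
                 min h1 h2 \<le> b \<and> b \<le> max h1 h2}"
      unfolding sbw_region_def Let_def s_def Zm_def Z0_def h1_def h2_def using kl by simp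
    have "measure lborel (sbw_region x xi n j k l q) = \<bar>Zm - Z0\<bar> * \<bar>h1 - h2\<bar>"
      unfolding reg by (rule para_area)
    also have "\<dots> = ?m l * (S - t0 * S / q)" using Z0Zm ml habs by simp
    finally have meas: "measure lborel (sbw_region x xi n j k l q) = ?m l * (S - t0 * S / q)" .
    show ?thesis unfolding T rate meas using q by (simp add: field_simps)
  qed
qed



lemma pair_neq:
  fixes X Y :: "'a \<Rightarrow> real"
  assumes M: "prob_space M" and ind: "prob_space.indep_var M borel X borel Y"
    and dX: "distributed M lborel X f" and dY: "distributed M lborel Y g"
  shows "AE \<omega> in M. X \<omega> \<noteq> Y \<omega>"
proof -
  interpret prob_space M by fact
  have rvX: "random_variable borel X" using dX unfolding distributed_def by simp
  have rvY: "random_variable borel Y" using dY unfolding distributed_def by simp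
  have eq: "distr M borel X \<Otimes>\<^sub>M distr M borel Y = distr M (borel \<Otimes>\<^sub>M borel) (\<lambda>x. (X x, Y x))"
    using ind indep_var_distribution_eq by blast
  define D where "D = {p::real \<times> real. fst p = snd p}"
  have "closed D" unfolding D_def by (intro closed_Collect_eq continuous_intros)
  hence Db: "D \<in> sets (borel \<Otimes>\<^sub>M borel)" unfolding borel_prod by (rule borel_closed)
  have XY: "(\<lambda>x. (X x, Y x)) \<in> measurable M (borel \<Otimes>\<^sub>M borel)" using rvX rvY by (rule measurable_Pair)
  interpret PY: prob_space "distr M borel Y" by (rule prob_space_distr[OF rvY])
  have single: "emeasure (distr M borel Y) {a} = 0" for a
  proof -
    have "emeasure (distr M borel Y) {a} = emeasure M (Y -` {a} \<inter> space M)"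
      using rvY by (intro emeasure_distr) auto
    also have "\<dots> = emeasure (distr M lborel Y) {a}"
      using dY unfolding distributed_def by (intro emeasure_distr[symmetric]) auto
    also have "\<dots> = emeasure (density lborel g) {a}" using dY unfolding distributed_def by simp
    also have "\<dots> = (\<integral>\<^sup>+ y. g y * indicator {a} y \<partial>lborel)"
      using dY unfolding distributed_def by (intro emeasure_density) auto
    also have "\<dots> = (\<integral>\<^sup>+ (y::real). 0 \<partial>lborel)"
    proof (rule nn_integral_cong_AE)
      show "AE y in lborel. g y * indicator {a} y = (0::ennreal)"
        using AE_lborel_singleton[of a] by (rule eventually_mono) simp
    qed
    finally show ?thesis by simp
  qed
  have "emeasure M ((\<lambda>x. (X x, Y x)) -` D \<inter> space M) = emeasure (distr M (borel \<Otimes>\<^sub>M borel) (\<lambda>x. (X x, Y x))) D"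
    using XY Db by (intro emeasure_distr[symmetric])
  also have "\<dots> = emeasure (distr M borel X \<Otimes>\<^sub>M distr M borel Y) D" using eq by simp
  also have "\<dots> = (\<integral>\<^sup>+a. emeasure (distr M borel Y) (Pair a -` D) \<partial>distr M borel X)"
  proof (rule PY.emeasure_pair_measure_alt)
    have "sets (distr M borel X \<Otimes>\<^sub>M distr M borel Y) = sets (borel \<Otimes>\<^sub>M borel)"
      by (intro sets_pair_measure_cong) auto
    thus "D \<in> sets (distr M borel X \<Otimes>\<^sub>M distr M borel Y)" using Db by simp
  qed
  also have "\<dots> = (\<integral>\<^sup>+a. 0 \<partial>distr M borel X)"
  proof (intro nn_integral_cong)
    fix a :: real
    have "Pair a -` D = {a}" unfolding D_def by auto
    thus "emeasure (distr M borel Y) (Pair a -` D) = 0" using single by simp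
  qed
  finally have z: "emeasure M ((\<lambda>x. (X x, Y x)) -` D \<inter> space M) = 0" by simp
  have m: "(\<lambda>x. (X x, Y x)) -` D \<inter> space M \<in> sets M" using XY Db by (rule measurable_sets)
  show ?thesis
  proof -
    have "{x \<in> space M. \<not> X x \<noteq> Y x} = (\<lambda>x. (X x, Y x)) -` D \<inter> space M" unfolding D_def by auto
    from AE_iff_measurable[OF m this] z show ?thesis by simp
  qed
qed

lemma ae_inj:
  fixes \<xi> :: "nat \<Rightarrow> 'a \<Rightarrow> real"
  assumes M: "prob_space M" and ind: "prob_space.indep_vars M (\<lambda>_. borel) \<xi> {1..n}"
    and d: "\<forall>i\<in>{1..n}. distributed M lborel (\<xi> i) (f i)"
  shows "AE \<omega> in M. inj_on (\<lambda>i. \<xi> i \<omega>) {1..n}"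
proof -
  interpret prob_space M by fact
  have p: "AE \<omega> in M. \<xi> i \<omega> \<noteq> \<xi> i' \<omega>" if i: "i \<in> {1..n}" "i' \<in> {1..n}" "i \<noteq> i'" for i i'
  proof -
    have "indep_vars (\<lambda>_. borel) \<xi> (insert i {i'})"
      using ind by (rule indep_vars_subset) (use i in auto)
    hence "indep_var borel (\<xi> i) borel (\<lambda>\<omega>. \<Sum>i\<in>{i'}. \<xi> i \<omega>)"
      using i by (intro indep_vars_sum[of "{i'}" i \<xi>]) auto
    hence "indep_var borel (\<xi> i) borel (\<xi> i')" by simp
    thus ?thesis using pair_neq[OF M] d i by blast
  qed
  have "AE \<omega> in M. \<forall>i\<in>{1..n}. \<forall>i'\<in>{1..n}. i \<noteq> i' \<longrightarrow> \<xi> i \<omega> \<noteq> \<xi> i' \<omega>"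
    using p by (intro AE_finite_allI) (auto intro!: AE_finite_allI)
  thus ?thesis by (rule AE_mp) (auto intro!: AE_I2 inj_onI)
qed


theorem proposition1:
  fixes M :: "'a measure" and x :: "nat \<Rightarrow> real" and \<xi> :: "nat \<Rightarrow> 'a \<Rightarrow> real"
    and n j k l :: nat and q :: real
  assumes "prob_space M"
    and "1 \<le> n"
    and "\<forall>i\<in>{1..n}. 0 < x i"
    and "\<forall>i\<in>{1..n}. \<forall>i'\<in>{1..n}. i \<le> i' \<longrightarrow> x i' \<le> x i"
    and "prob_space.indep_vars M (\<lambda>_. borel) \<xi> {1..n}"
    and "\<forall>i\<in>{1..n}. distributed M lborel (\<xi> i) (exponential_density (x i))"
    and "1 \<le> j" "j \<le> k" "k \<le> l" "l \<le> n" "k = l \<longrightarrow> j = l"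
    and "0 < q"
  shows "AE \<omega> in M. sbw_T x (\<lambda>i. \<xi> i \<omega>) n j k l \<le> ereal q \<longrightarrow>
           (q - real_of_ereal (sbw_T x (\<lambda>i. \<xi> i \<omega>) n j k l)) * sbw_rate x (\<lambda>i. \<xi> i \<omega>) n j k l
             = q * measure lborel (sbw_region x (\<lambda>i. \<xi> i \<omega>) n j k l q)"
proof -
  have "AE \<omega> in M. inj_on (\<lambda>i. \<xi> i \<omega>) {1..n}"
    by (rule ae_inj[OF assms(1) assms(5) assms(6)])
  thus ?thesis
    by (rule eventually_mono) (rule det_main[OF _ assms(3) assms(7-12)])
qed

end
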